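(* For every graph $G$ with exactly $\ell$ vertices of degree $1$, $\mathrm{sp}(G)\ge \lceil 2(\ell-1)/3\rceil$.
   Context: A family of subsets $V_1,\dots,V_k$ of a set $V$ is a separating system of $V$ if for every two distinct $u,v\in V$ there is $i$ with $|V_i\cap\{u,v\}|=1$. For a graph $G$, $\mathrm{sp}(G)$ is the minimum size of a family $\mathcal P$ of paths in $G$ (single-vertex paths allowed) such that $\{V(P):P\in\mathcal P\}$ is a separating system of $V(G)$. *)

theory Defs
  imports Complex_Main
begin

definition simple_graph :: "'a set \<Rightarrow> ('a \<Rightarrow> 'a \<Rightarrow> bool) \<Rightarrow> bool" where
  "simple_graph V E \<longleftrightarrow> finite V \<and> (\<forall>u v. E u v \<longrightarrow> u \<in> V \<and> v \<in> V \<and> u \<noteq> v)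
      \<and> (\<forall>u v. E u v \<longrightarrow> E v u)"

definition degree :: "'a set \<Rightarrow> ('a \<Rightarrow> 'a \<Rightarrow> bool) \<Rightarrow> 'a \<Rightarrow> nat" where
  "degree V E v = card {u \<in> V. E v u}"

definition is_path :: "'a set \<Rightarrow> ('a \<Rightarrow> 'a \<Rightarrow> bool) \<Rightarrow> 'a list \<Rightarrow> bool" where
  "is_path V E p \<longleftrightarrow> p \<noteq> [] \<and> distinct p \<and> set p \<subseteq> V
      \<and> (\<forall>i. Suc i < length p \<longrightarrow> E (p ! i) (p ! Suc i))"

definition separating_system :: "'a set \<Rightarrow> 'a set set \<Rightarrow> bool" where
  "separating_system V F \<longleftrightarrow> (\<forall>S\<in>F. S \<subseteq> V)
      \<and> (\<forall>u\<in>V. \<forall>v\<in>V. u \<noteq> v \<longrightarrow> (\<exists>S\<in>F. card (S \<inter> {u, v}) = 1))"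

definition sp :: "'a set \<Rightarrow> ('a \<Rightarrow> 'a \<Rightarrow> bool) \<Rightarrow> nat" where
  "sp V E = (LEAST k. \<exists>P. finite P \<and> card P = k \<and> (\<forall>p\<in>P. is_path V E p)
      \<and> separating_system V (set ` P))"

end

theory Submission
  imports Defs
begin

lemma leaf_end:
  assumes sg: "simple_graph V E" and pa: "is_path V E p" and x: "x \<in> set p"
    and d: "degree V E x = 1"
  shows "x = hd p \<or> x = last p"
proof (rule ccontr)
  assume nh: "\<not> ?thesis"
  from x obtain i where i: "i < length p" "p!i = x" by (auto simp: in_set_conv_nth)
  have pne: "p \<noteq> []" using pa by (simp add: is_path_def)
  have i0: "i \<noteq> 0"
  proof
    assume "i = 0" then have "x = hd p" using i pne by (simp add: hd_conv_nth)
    with nh show False by simp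
  qed
  have "i \<noteq> length p - 1"
  proof
    assume "i = length p - 1" then have "x = last p" using i pne by (simp add: last_conv_nth)
    with nh show False by simp
  qed
  then have i1: "Suc i < length p" using i by arith
  have adj: "\<And>j. Suc j < length p \<Longrightarrow> E (p ! j) (p ! Suc j)" using pa by (simp add: is_path_def)
  have e1: "E x (p!Suc i)" using adj[OF i1] i(2) by simp
  have a: "Suc (i-1) < length p" "Suc (i-1) = i" using i i0 by auto
  have "E (p!(i-1)) (p ! Suc (i-1))" by (rule adj[OF a(1)])
  then have e0: "E (p!(i-1)) x" using a(2) i(2) by simp
  have ne: "p!(i-1) \<noteq> p!Suc i"
    using pa i1 i0 unfolding is_path_def by (simp add: nth_eq_iff_index_eq)
  have sub: "{p!(i-1), p!Suc i} \<subseteq> {u\<in>V. E x u}"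
    using sg e0 e1 unfolding simple_graph_def by blast
  have "finite V" using sg by (simp add: simple_graph_def)
  then have "finite {u\<in>V. E x u}" by simp
  then have "card {p!(i-1), p!Suc i} \<le> card {u\<in>V. E x u}"
    using sub by (rule card_mono)
  then have "card {p!(i-1), p!Suc i} \<le> degree V E x" by (simp only: degree_def)
  with ne d show False by simp
qed

lemma path_leaves:
  assumes sg: "simple_graph V E" and pa: "is_path V E p"
  shows "card {x\<in>{v\<in>V. degree V E v = 1}. x \<in> set p} \<le> 2"
proof -
  have "{x\<in>{v\<in>V. degree V E v = 1}. x \<in> set p} \<subseteq> {hd p, last p}"
    using leaf_end[OF sg pa] by blast
  then have "card {x\<in>{v\<in>V. degree V E v = 1}. x \<in> set p} \<le> card {hd p, last p}"
    by (rule card_mono[rotated]) simp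
  also have "\<dots> \<le> 2" by (simp add: card_insert_if)
  finally show ?thesis .
qed

lemma main_count:
  assumes sg: "simple_graph V E" and fP: "finite P" and paths: "\<forall>p\<in>P. is_path V E p"
    and sep: "separating_system V (set ` P)"
  shows "2 * card {v\<in>V. degree V E v = 1} \<le> 3 * card P + 2"
proof -
  define L where "L = {v\<in>V. degree V E v = 1}"
  define c where "c x = card {p\<in>P. x \<in> set p}" for x
  have fL: "finite L" using sg unfolding L_def simple_graph_def by auto
  have cs: "c x = (\<Sum>p\<in>P. if x \<in> set p then 1 else 0)" for x
    unfolding c_def using fP by (simp add: sum.inter_filter[symmetric])
  have cs2: "card {x\<in>L. x \<in> set p} = (\<Sum>x\<in>L. if x \<in> set p then 1 else 0)" for p
    using fL by (simp add: sum.inter_filter[symmetric])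
  have S1: "(\<Sum>x\<in>L. c x) = (\<Sum>p\<in>P. card {x\<in>L. x \<in> set p})"
    unfolding cs cs2 by (rule sum.swap)
  have S2: "(\<Sum>p\<in>P. card {x\<in>L. x \<in> set p}) \<le> 2 * card P"
  proof -
    have "(\<Sum>p\<in>P. card {x\<in>L. x \<in> set p}) \<le> (\<Sum>p\<in>P. 2)"
      using path_leaves[OF sg] paths unfolding L_def by (intro sum_mono) blast
    then show ?thesis by simp
  qed
  define A where "A = {x\<in>L. c x = 1}"
  define U where "U = {x\<in>L. c x = 0}"
  have sepd: "\<exists>r\<in>P. card (set r \<inter> {x, y}) = 1" if "x \<in> L" "y \<in> L" "x \<noteq> y" for x y
    using sep that unfolding separating_system_def L_def by auto
  have cardA: "card A \<le> card P"
  proof -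
    define f where "f x = (SOME p. p \<in> P \<and> x \<in> set p)" for x
    have cov: "{p\<in>P. x \<in> set p} = {f x} \<and> f x \<in> P" if "x \<in> A" for x
    proof -
      from that have "card {p\<in>P. x \<in> set p} = 1" unfolding A_def c_def by auto
      then obtain q where q: "{p\<in>P. x \<in> set p} = {q}" by (rule card_1_singletonE)
      then have "q \<in> P \<and> x \<in> set q" by auto
      then have fx: "f x \<in> P \<and> x \<in> set (f x)" unfolding f_def by (rule someI)
      then have "f x \<in> {p\<in>P. x \<in> set p}" by simp
      then have "f x = q" using q by simp
      then show ?thesis using q fx by simp
    qed
    have "inj_on f A"
    proof
      fix x y assume x: "x \<in> A" and y: "y \<in> A" and fe: "f x = f y"
      show "x = y"
      proof (rule ccontr)
        assume "x \<noteq> y"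
        then obtain r where r: "r \<in> P" "card (set r \<inter> {x, y}) = 1"
          using sepd x y unfolding A_def by auto
        have cx: "{p\<in>P. x \<in> set p} = {f x}" using cov[OF x] by simp
        have cy: "{p\<in>P. y \<in> set p} = {f x}" using cov[OF y] fe by simp
        have "x \<in> set r \<longleftrightarrow> r \<in> {p\<in>P. x \<in> set p}" using r(1) by simp
        also have "\<dots> \<longleftrightarrow> r = f x" unfolding cx by simp
        also have "\<dots> \<longleftrightarrow> r \<in> {p\<in>P. y \<in> set p}" unfolding cy by simp
        also have "\<dots> \<longleftrightarrow> y \<in> set r" using r(1) by simp
        finally have "x \<in> set r \<longleftrightarrow> y \<in> set r" .
        then have "set r \<inter> {x, y} = {} \<or> set r \<inter> {x, y} = {x, y}" by blast
        then show False
        proof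
          assume "set r \<inter> {x, y} = {}" with r(2) show False by simp
        next
          assume "set r \<inter> {x, y} = {x, y}" with r(2) \<open>x \<noteq> y\<close> show False by simp
        qed
      qed
    qed
    moreover have "f ` A \<subseteq> P" using cov by auto
    ultimately show ?thesis using fP card_inj_on_le by blast
  qed
  have cardU: "card U \<le> 1"
  proof -
    have fU: "finite U" using fL unfolding U_def by auto
    have "\<forall>x\<in>U. \<forall>y\<in>U. x = y"
    proof (intro ballI, rule ccontr)
      fix x y assume x: "x \<in> U" and y: "y \<in> U" and "x \<noteq> y"
      then obtain r where r: "r \<in> P" "card (set r \<inter> {x, y}) = 1"
        using sepd unfolding U_def by auto
      have "{p\<in>P. x \<in> set p} = {}" using x fP unfolding U_def c_def by simp
      then have nx: "x \<notin> set r" using r(1) by blast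
      have "{p\<in>P. y \<in> set p} = {}" using y fP unfolding U_def c_def by simp
      then have ny: "y \<notin> set r" using r(1) by blast
      have "set r \<inter> {x, y} = {}" using nx ny by blast
      with r(2) show False by simp
    qed
    then show ?thesis using card_le_Suc0_iff_eq[OF fU] by simp
  qed
  have eA: "card A = (\<Sum>x\<in>L. if c x = 1 then 1 else 0)"
    unfolding A_def using fL by (simp add: sum.inter_filter[symmetric])
  have eU: "card U = (\<Sum>x\<in>L. if c x = 0 then 1 else 0)"
    unfolding U_def using fL by (simp add: sum.inter_filter[symmetric])
  have "2 * card L = (\<Sum>x\<in>L. 2)" by simp
  also have "\<dots> \<le> (\<Sum>x\<in>L. c x + (if c x = 1 then 1 else 0) + 2 * (if c x = 0 then 1 else 0))"
    by (rule sum_mono) auto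
  also have "\<dots> = (\<Sum>x\<in>L. c x) + card A + 2 * card U"
    unfolding eA eU by (simp add: sum.distrib sum_distrib_left)
  finally have "2 * card L \<le> (\<Sum>x\<in>L. c x) + card A + 2 * card U" .
  then show ?thesis using S1 S2 cardA cardU unfolding L_def by linarith
qed

theorem lemma2p4:
  fixes V :: "'a set" and E :: "'a \<Rightarrow> 'a \<Rightarrow> bool" and l :: nat
  assumes "simple_graph V E"
    and "card {v \<in> V. degree V E v = 1} = l"
  shows "int (sp V E) \<ge> \<lceil>2 * (real l - 1) / 3\<rceil>"
proof -
  let ?Q = "\<lambda>k. \<exists>P. finite P \<and> card P = k \<and> (\<forall>p\<in>P. is_path V E p)
      \<and> separating_system V (set ` P)"
  define P0 where "P0 = (\<lambda>v. [v]) ` V"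
  have fV: "finite V" using assms(1) unfolding simple_graph_def by auto
  have "?Q (card P0)"
  proof (intro exI conjI)
    show "finite P0" using fV unfolding P0_def by auto
    show "\<forall>p\<in>P0. is_path V E p" unfolding P0_def is_path_def by auto
    show "separating_system V (set ` P0)"
      unfolding separating_system_def P0_def
    proof (intro conjI ballI impI)
      fix u v assume "u \<in> V" "v \<in> V" "u \<noteq> v"
      then show "\<exists>S\<in>set ` (\<lambda>v. [v]) ` V. card (S \<inter> {u, v}) = 1"
        proof (intro bexI[of _ "{u}"])
        show "{u} \<in> set ` (\<lambda>v. [v]) ` V" using \<open>u \<in> V\<close> by (simp add: image_image)
      qed (use \<open>u \<noteq> v\<close> in auto)
    qed auto
  qed simp
  then have "?Q (sp V E)" unfolding sp_def by (rule LeastI)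
  then obtain P where P: "finite P" "card P = sp V E" "\<forall>p\<in>P. is_path V E p"
    "separating_system V (set ` P)" by blast
  have "2 * l \<le> 3 * sp V E + 2" using main_count[OF assms(1) P(1) P(3) P(4)] P(2) assms(2)
    by simp
  then have "real (2 * l) \<le> real (3 * sp V E + 2)" by (simp only: of_nat_le_iff)
  then have "2 * (real l - 1) / 3 \<le> real (sp V E)" by simp
  then show ?thesis by (simp add: ceiling_le_iff)
qed

end
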